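(* Let $n\ge0$ and let $k,k_0,k_1,\dots,k_n$ be integers with $k_0,\dots,k_n\neq0$. Then $$\Big|\int_{-\pi}^{\pi}\frac{\sin(k\beta/2)}{2\sin(\beta/2)}\prod_{j=0}^{n}\frac{\sin(k_j\beta/2)}{k_j\sin(\beta/2)}\,d\beta\Big|\le4,\qquad \Big|\int_{-\pi}^{\pi}\frac{\cos(\beta/2)\sin(k\beta/2)}{2\sin(\beta/2)}\prod_{j=0}^{n}\frac{\sin(k_j\beta/2)}{k_j\sin(\beta/2)}\,d\beta\Big|\le\frac{10}{3}.$$ *)

theory Defs
  imports "HOL-Analysis.Analysis"
begin

end

theory Submission
  imports Defs
begin

fun S :: "nat \<Rightarrow> real" where
  "S 0 = 0"
| "S (Suc p) = S p + 4 * (-1)^p / (2 * real p + 1)"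

lemma S_odd: "S (2*q+1) = S (2*q) + 4 / (4 * real q + 1)"
  by simp
lemma S_even: "S (2*q+2) = S (2*q+1) - 4 / (4 * real q + 3)"
proof -
  have "S (2*q+2) = S (Suc (2*q+1))" by simp
  also have "\<dots> = S (2*q+1) + 4 * (-1)^(2*q+1) / (2 * real (2*q+1) + 1)" by (rule S.simps(2))
  also have "\<dots> = S (2*q+1) - 4 / (4 * real q + 3)" by (simp add: algebra_simps)
  finally show ?thesis .
qed

lemma S_ind: "0 \<le> S (2*q) \<and> S (2*q+1) \<le> 4 \<and> S (2*q+1) - 2 / (4 * real q + 3) \<le> 10/3"
proof (induction q)
  case 0
  then show ?case by simp
next
  case (Suc q)
  have e1: "S (2*Suc q) = S (2*q) + 4 / (4 * real q + 1) - 4 / (4 * real q + 3)"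
    using S_even[of q] S_odd[of q] by simp
  have e2: "S (2*Suc q+1) = S (2*q+1) - 4 / (4 * real q + 3) + 4 / (4 * real q + 5)"
    using S_even[of q] S_odd[of "Suc q"] by (simp add: algebra_simps)
  have i1: "4 / (4 * real q + 3) \<le> 4 / (4 * real q + 1)"
    by (simp add: frac_le)
  have i2: "4 / (4 * real q + 5) \<le> 4 / (4 * real q + 3)"
    by (simp add: frac_le)
  have i3: "- 2 / (4 * real q + 3) + 4 / (4 * real q + 5) - 2 / (4 * real q + 7) \<le> 0"
  proof -
    define y where "y = 4 * real q + 5"
    have y: "y \<ge> 5" unfolding y_def by simp
    have "- 2 / (y - 2) + 4 / y - 2 / (y+2) = -16 / ((y-2)*y*(y+2))"
      using y by (simp add: field_simps)
    also have "\<dots> \<le> 0" using y by (simp add: divide_nonpos_pos)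
    finally show ?thesis unfolding y_def by (simp add: algebra_simps)
  qed
  have "S (2 * Suc q + 1) - 2 / (4 * real (Suc q) + 3) = S (2*q+1) - 4 / (4 * real q + 3) + 4 / (4 * real q + 5) - 2 / (4 * real q + 7)"
    using e2 by (simp add: algebra_simps)
  then show ?case using Suc.IH e1 e2 i1 i2 i3 by linarith
qed

lemma S_bounds: "0 \<le> S p \<and> S p \<le> 4 \<and> S p + S (Suc p) \<le> 20/3"
proof -
  obtain q where "p = 2*q \<or> p = 2*q+1" by (metis oddE evenE) 
  then show ?thesis
  proof
    assume p: "p = 2*q"
    have "4 / (4 * real q + 3) \<le> 4 / (4 * real q + 1)" by (simp add: frac_le)
    moreover have "4 / (4 * real q + 1) \<ge> 0" by simp
    moreover have "S (2*q+1) = S (2*q) + 4 / (4 * real q + 1)" by (rule S_odd)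
    moreover note S_ind[of q]
    ultimately have "0 \<le> S (2*q) \<and> S (2*q) \<le> 4 \<and> S (2*q) + S (2*q+1) \<le> 20/3" by linarith
    then show ?thesis using p by simp
  next
    assume p: "p = 2*q+1"
    have "4 / (4 * real q + 1) \<ge> 0" by simp
    then have "0 \<le> S (2*q+1) \<and> S (2*q+1) \<le> 4 \<and> S (2*q+1) + S (2*q+2) \<le> 20/3"
      using S_ind[of q] S_odd[of q] S_even[of q] by linarith
    then show ?thesis using p by (simp add: numeral_2_eq_2 del: S.simps)
  qed
qed
definition g :: "int \<Rightarrow> real \<Rightarrow> real" where
  "g a b = sin (of_int a * b / 2) / sin (b / 2)"

definition Jn :: "nat \<Rightarrow> real" where
  "Jn a = (if odd a then 2*pi else 2 * S (a div 2))"

lemma sin_half_nz: "b \<in> {-pi..pi} \<Longrightarrow> b \<noteq> 0 \<Longrightarrow> sin (b/2) \<noteq> 0"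
proof -
  assume b: "b \<in> {-pi..pi}" "b \<noteq> 0"
  show ?thesis
  proof (cases "b > 0")
    case True
    then have "sin (b/2) > 0" using b by (intro sin_gt_zero) auto
    then show ?thesis by simp
  next
    case False
    then have "sin (-b/2) > 0" using b by (intro sin_gt_zero) auto
    then show ?thesis by simp
  qed
qed

lemma cos_integral:
  fixes c :: real assumes c: "c \<noteq> 0"
  shows "((\<lambda>b. cos (c * b / 2)) has_integral 4 * sin (c * pi / 2) / c) {-pi..pi}"
proof -
  have d: "((\<lambda>b. 2 * sin (c * b / 2) / c) has_real_derivative cos (c * b / 2)) (at b within {-pi..pi})" for b
    using c by (auto intro!: derivative_eq_intros simp: field_simps)
  have "((\<lambda>b. cos (c * b / 2)) has_integral (2 * sin (c * pi / 2) / c - 2 * sin (c * (-pi) / 2) / c)) {-pi..pi}"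
    by (rule fundamental_theorem_of_calculus) (auto simp: has_real_derivative_iff_has_vector_derivative[symmetric] intro: d)
  also have "2 * sin (c * pi / 2) / c - 2 * sin (c * (-pi) / 2) / c = 4 * sin (c * pi / 2) / c"
    by (simp add: field_simps)
  finally show ?thesis .
qed

lemma g_step:
  assumes "sin (b/2) \<noteq> 0"
  shows "g (a+2) b = g a b + 2 * cos (of_int (a+1) * b / 2)"
proof -
  have "sin (of_int (a+2) * b / 2) = sin (of_int (a+1) * b / 2 + b/2)"
    by (simp add: algebra_simps add_divide_distrib)
  moreover have "of_int a * b / 2 = of_int (a+1) * b / 2 - b/2"
    by (simp add: field_simps)
  then have "sin (of_int a * b / 2) = sin (of_int (a+1) * b / 2 - b/2)"
    by metis
  ultimately have "sin (of_int (a+2) * b / 2) = sin (of_int a * b / 2) + 2 * cos (of_int (a+1) * b / 2) * sin (b/2)"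
    by (simp add: sin_add sin_diff)
  then show ?thesis using assms unfolding g_def by (simp add: field_simps)
qed

lemma g_step_int:
  assumes "(g a has_integral J) {-pi..pi}" "a + 1 \<noteq> 0"
  shows "(g (a+2) has_integral J + 8 * sin (of_int (a+1) * pi / 2) / of_int (a+1)) {-pi..pi}"
proof -
  have "((\<lambda>b. g a b + 2 * cos (of_int (a+1) * b / 2)) has_integral J + 2 * (4 * sin (of_int (a+1) * pi / 2) / of_int (a+1))) {-pi..pi}"
    by (intro has_integral_add assms has_integral_mult_right cos_integral) (use assms in auto)
  then have F: "((\<lambda>b. g a b + 2 * cos (of_int (a+1) * b / 2)) has_integral J + 8 * sin (of_int (a+1) * pi / 2) / of_int (a+1)) {-pi..pi}"
    by simp
  show ?thesis
    by (intro has_integral_spike_finite[where S="{0}", OF _ _ F]) (auto simp: g_step sin_half_nz)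
qed

lemma g_int_nat: "(g (int (2*p)) has_integral Jn (2*p)) {-pi..pi} \<and> (g (int (2*p+1)) has_integral Jn (2*p+1)) {-pi..pi}"
proof (induction p)
  case 0
  have "(g 0 has_integral 0) {-pi..pi}" unfolding g_def by simp
  moreover have F: "((\<lambda>b. 1::real) has_integral 2*pi) {-pi..pi}"
    using has_integral_const_real[of "1::real" "-pi" pi] by simp
  have "(g 1 has_integral 2*pi) {-pi..pi}"
    by (intro has_integral_spike_finite[where S="{0}", OF _ _ F]) (auto simp: g_def sin_half_nz)
  ultimately show ?case by (simp add: Jn_def)
next
  case (Suc p)
  have a: "(g (int (2*p) + 2) has_integral Jn (2*p) + 8 * sin (of_int (int (2*p)+1) * pi / 2) / of_int (int (2*p)+1)) {-pi..pi}"
    by (rule g_step_int) (use Suc.IH in auto)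
  have "sin (of_int (int (2*p)+1) * pi / 2) = sin (real p * pi + pi/2)"
    by (simp add: algebra_simps add_divide_distrib)
  also have "\<dots> = (-1)^p" by (simp add: sin_add cos_npi)
  finally have s1: "sin (of_int (int (2*p)+1) * pi / 2) = (-1)^p" .
  have "Jn (2*p) + 8 * (-1)^p / of_int (int (2*p)+1) = Jn (2 * Suc p)"
    by (simp add: Jn_def algebra_simps)
  then have A: "(g (int (2 * Suc p)) has_integral Jn (2 * Suc p)) {-pi..pi}"
    using a s1 by (simp add: algebra_simps)
  have b: "(g (int (2*p+1) + 2) has_integral Jn (2*p+1) + 8 * sin (of_int (int (2*p+1)+1) * pi / 2) / of_int (int (2*p+1)+1)) {-pi..pi}"
    by (rule g_step_int) (use Suc.IH in auto)
  have "of_int (int (2*p+1)+1) * pi / 2 = real (p+1) * pi"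
    by (simp add: field_simps)
  then have "sin (of_int (int (2*p+1)+1) * pi / 2) = sin (real (p+1) * pi)"
    by metis
  also have "\<dots> = 0" by (rule sin_npi)
  finally have "sin (of_int (int (2*p+1)+1) * pi / 2) = 0" .
  then have B: "(g (int (2 * Suc p + 1)) has_integral Jn (2 * Suc p + 1)) {-pi..pi}"
    using b by (simp add: Jn_def algebra_simps)
  show ?case using A B by simp
qed

definition Jb :: "int \<Rightarrow> real" where
  "Jb a = (if a \<ge> 0 then Jn (nat a) else - Jn (nat (-a)))"

lemma g_int_nat': "(g (int m) has_integral Jn m) {-pi..pi}"
proof -
  obtain p where "m = 2*p \<or> m = 2*p+1" by (metis oddE evenE)
  then show ?thesis using g_int_nat[of p] by auto
qed

lemma g_neg: "g (-a) = (\<lambda>b. - g a b)"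
  by (rule ext) (simp add: g_def)

lemma g_int: "(g a has_integral Jb a) {-pi..pi}"
proof (cases "a \<ge> 0")
  case True
  then show ?thesis using g_int_nat'[of "nat a"] by (simp add: Jb_def)
next
  case False
  then have "(g (- (int (nat (-a)))) has_integral - Jn (nat (-a))) {-pi..pi}"
    unfolding g_neg by (intro has_integral_neg g_int_nat')
  then show ?thesis using False by (simp add: Jb_def)
qed

lemma Jn_bound: "0 \<le> Jn m \<and> Jn m \<le> 8"
  using S_bounds[of "m div 2"] pi_less_4 pi_gt_zero by (auto simp: Jn_def)

lemma Jb_bound: "\<bar>Jb a\<bar> \<le> 8"
  using Jn_bound by (auto simp: Jb_def)

lemma Jb_neg: "Jb (-a) = - Jb a"
  by (simp add: Jb_def Jn_def)

lemma Jn_pair: "\<bar>Jn (m+2) + Jn m\<bar> \<le> 40/3"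
proof (cases "odd m")
  case True
  then show ?thesis using pi_approx by (simp add: Jn_def)
next
  case False
  then obtain p where p: "m = 2*p" by blast
  have "m + 2 = 2 * Suc p" using p by simp
  then show ?thesis using S_bounds[of p] S_bounds[of "Suc p"] p by (simp add: Jn_def)
qed

lemma Jb_pair: "\<bar>Jb (a+1) + Jb (a-1)\<bar> \<le> 40/3"
proof -
  have pos: "\<bar>Jb (a+1) + Jb (a-1)\<bar> \<le> 40/3" if "a \<ge> 0" for a
  proof (cases "a = 0")
    case True
    then show ?thesis using Jb_neg[of 1] by simp
  next
    case False
    then have "Jb (a+1) = Jn (nat (a-1) + 2)" "Jb (a-1) = Jn (nat (a-1))"
      using that by (auto simp: Jb_def intro!: arg_cong[where f=Jn])
    then show ?thesis using Jn_pair by simp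
  qed
  show ?thesis
  proof (cases "a \<ge> 0")
    case True
    then show ?thesis using pos by blast
  next
    case False
    have e1: "Jb (a+1) = - Jb (-a - 1)" using Jb_neg[of "-a-1"] by (simp add: add.commute)
    have e2: "Jb (a-1) = - Jb (-a + 1)" using Jb_neg[of "-a+1"] by simp
    have "\<bar>Jb (-a+1) + Jb (-a-1)\<bar> \<le> 40/3" using pos[of "-a"] False by simp
    then show ?thesis unfolding e1 e2 by linarith
  qed
qed

definition evalc :: "(real \<times> int) list \<Rightarrow> real \<Rightarrow> real" where
  "evalc L b = (\<Sum>(w,m)\<leftarrow>L. w * cos (of_int m * b / 2))"

definition wsum :: "(real \<times> int) list \<Rightarrow> real" where
  "wsum L = (\<Sum>(w,m)\<leftarrow>L. w)"

definition nonneg :: "(real \<times> int) list \<Rightarrow> bool" where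
  "nonneg L = (\<forall>(w,m)\<in>set L. w \<ge> 0)"

fun mul1 :: "real \<times> int \<Rightarrow> (real \<times> int) list \<Rightarrow> (real \<times> int) list" where
  "mul1 p [] = []"
| "mul1 (w1,m1) ((w2,m2) # L) = (w1*w2/2, m1+m2) # (w1*w2/2, m1-m2) # mul1 (w1,m1) L"

fun mulc :: "(real \<times> int) list \<Rightarrow> (real \<times> int) list \<Rightarrow> (real \<times> int) list" where
  "mulc [] L = []"
| "mulc (p # L1) L2 = mul1 p L2 @ mulc L1 L2"

lemma cos_cos: "cos (x::real) * cos z = (cos (x+z) + cos (x-z))/2"
  by (simp add: cos_add cos_diff)

lemma evalc_mul1: "evalc (mul1 (w1,m1) L) b = w1 * cos (of_int m1 * b / 2) * evalc L b"
proof (induction L)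
  case Nil
  then show ?case by (simp add: evalc_def)
next
  case (Cons p L)
  obtain w2 m2 where p: "p = (w2,m2)" by fastforce
  have c: "cos (of_int m1 * b / 2) * cos (of_int m2 * b / 2) = (cos (of_int (m1+m2) * b / 2) + cos (of_int (m1-m2) * b / 2))/2"
    unfolding cos_cos by (simp add: algebra_simps add_divide_distrib diff_divide_distrib)
  have "evalc (mul1 (w1,m1) (p # L)) b = w1*w2/2 * cos (of_int (m1+m2) * b / 2) + w1*w2/2 * cos (of_int (m1-m2) * b / 2) + evalc (mul1 (w1,m1) L) b"
    by (simp add: p evalc_def)
  also have "\<dots> = w1 * cos (of_int m1 * b / 2) * (w2 * cos (of_int m2 * b / 2)) + evalc (mul1 (w1,m1) L) b"
    using c by (simp add: algebra_simps add_divide_distrib)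
  also have "\<dots> = w1 * cos (of_int m1 * b / 2) * evalc (p # L) b"
    using Cons.IH by (simp add: p evalc_def algebra_simps)
  finally show ?case .
qed

lemma evalc_append: "evalc (A @ B) b = evalc A b + evalc B b"
  by (simp add: evalc_def)
lemma wsum_append: "wsum (A @ B) = wsum A + wsum B"
  by (simp add: wsum_def)
lemma nonneg_append: "nonneg (A @ B) = (nonneg A \<and> nonneg B)"
  by (auto simp: nonneg_def)

lemma wsum_mul1: "wsum (mul1 (w1,m1) L) = w1 * wsum L"
  by (induction L) (auto simp: wsum_def algebra_simps)

lemma nonneg_mul1: "w1 \<ge> 0 \<Longrightarrow> nonneg L \<Longrightarrow> nonneg (mul1 (w1,m1) L)"
proof (induction L)
  case Nil
  then show ?case by (simp add: nonneg_def)
next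
  case (Cons p L)
  obtain w2 m2 where p: "p = (w2,m2)" by fastforce
  have "w2 \<ge> 0" "nonneg L" using Cons.prems by (auto simp: p nonneg_def)
  then have "nonneg (mul1 (w1,m1) L)" "w1 * w2 / 2 \<ge> 0" using Cons by auto
  then show ?case by (simp add: p nonneg_def)
qed

lemma evalc_mulc: "evalc (mulc L1 L2) b = evalc L1 b * evalc L2 b"
proof (induction L1)
  case Nil
  then show ?case by (simp add: evalc_def)
next
  case (Cons p L1)
  obtain w m where p: "p = (w,m)" by fastforce
  show ?case using Cons.IH by (simp add: p evalc_append evalc_mul1) (simp add: evalc_def algebra_simps)
qed

lemma wsum_mulc: "wsum (mulc L1 L2) = wsum L1 * wsum L2"
proof (induction L1)
  case Nil
  then show ?case by (simp add: wsum_def)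
next
  case (Cons p L1)
  obtain w m where p: "p = (w,m)" by fastforce
  show ?case using Cons.IH by (simp add: p wsum_append wsum_mul1) (simp add: wsum_def algebra_simps)
qed

lemma nonneg_mulc: "nonneg L1 \<Longrightarrow> nonneg L2 \<Longrightarrow> nonneg (mulc L1 L2)"
proof (induction L1)
  case Nil
  then show ?case by (simp add: nonneg_def)
next
  case (Cons p L1)
  obtain w m where p: "p = (w,m)" by fastforce
  have "w \<ge> 0" "nonneg L1" using Cons.prems by (auto simp: p nonneg_def)
  then show ?case using Cons by (simp add: p nonneg_append nonneg_mul1)
qed

lemma tele: "2 * sin y * (\<Sum>i<K. cos ((c - 2 * real i) * y)) = sin ((c+1)*y) - sin ((c + 1 - 2 * real K) * y)"
proof (induction K)
  case 0
  then show ?case by simp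
next
  case (Suc K)
  have "2 * sin y * cos ((c - 2 * real K) * y) = sin ((c - 2 * real K) * y + y) - sin ((c - 2 * real K) * y - y)"
    by (simp add: sin_add sin_diff)
  also have "\<dots> = sin ((c + 1 - 2 * real K) * y) - sin ((c + 1 - 2 * real (Suc K)) * y)"
    by (simp add: algebra_simps)
  finally show ?case using Suc.IH by (simp add: algebra_simps)
qed

definition basec :: "nat \<Rightarrow> (real \<times> int) list" where
  "basec K = map (\<lambda>i. (1 / real K, int K - 1 - 2 * int i)) [0..<K]"

lemma basec_props: "K \<ge> 1 \<Longrightarrow> nonneg (basec K) \<and> wsum (basec K) = 1"
  by (auto simp: basec_def nonneg_def wsum_def comp_def sum_list_triv)

lemma basec_eval:
  assumes K: "K \<ge> 1" and s: "sin (b/2) \<noteq> 0"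
  shows "sin (real K * b / 2) / (real K * sin (b/2)) = evalc (basec K) b"
proof -
  have "evalc (basec K) b = (\<Sum>i\<leftarrow>[0..<K]. 1 / real K * cos (of_int (int K - 1 - 2 * int i) * b / 2))"
    by (simp add: evalc_def basec_def comp_def)
  also have "\<dots> = (\<Sum>i<K. 1 / real K * cos ((real K - 1 - 2 * real i) * (b / 2)))"
    by (simp add: sum_list_sum_nth atLeast0LessThan)
  also have "\<dots> = 1 / real K * (\<Sum>i<K. cos ((real K - 1 - 2 * real i) * (b / 2)))"
    by (simp add: sum_distrib_left)
  finally have e: "evalc (basec K) b = 1 / real K * (\<Sum>i<K. cos ((real K - 1 - 2 * real i) * (b / 2)))" .
  have t: "2 * sin (b/2) * (\<Sum>i<K. cos ((real K - 1 - 2 * real i) * (b / 2))) = 2 * sin (real K * b / 2)"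
    using tele[where y="b/2" and K=K and c="real K - 1"] by (simp add: algebra_simps)
  show ?thesis unfolding e using t s K by (simp add: field_simps)
qed

lemma factor_rep:
  fixes k :: int assumes k: "k \<noteq> 0"
  shows "\<exists>L. nonneg L \<and> wsum L = 1 \<and> (\<forall>b. sin (b/2) \<noteq> 0 \<longrightarrow> sin (of_int k * b / 2) / (of_int k * sin (b/2)) = evalc L b)"
proof (intro exI conjI allI impI)
  let ?K = "nat \<bar>k\<bar>"
  have K: "?K \<ge> 1" using k by simp
  show "nonneg (basec ?K)" "wsum (basec ?K) = 1" using basec_props[OF K] by auto
  fix b :: real assume s: "sin (b/2) \<noteq> 0"
  have "sin (of_int k * b / 2) / (of_int k * sin (b/2)) = sin (real ?K * b / 2) / (real ?K * sin (b/2))"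
  proof (cases "k < 0")
    case True
    then have "real ?K = - of_int k" by simp
    then show ?thesis by (simp add: minus_divide_left[symmetric])
  next
    case False
    then show ?thesis by simp
  qed
  also have "\<dots> = evalc (basec ?K) b" by (rule basec_eval[OF K s])
  finally show "sin (of_int k * b / 2) / (of_int k * sin (b/2)) = evalc (basec ?K) b" .
qed

lemma prod_rep:
  fixes ks :: "nat \<Rightarrow> int"
  assumes "\<And>j. j \<le> n \<Longrightarrow> ks j \<noteq> 0"
  shows "\<exists>L. nonneg L \<and> wsum L = 1 \<and> (\<forall>b. sin (b/2) \<noteq> 0 \<longrightarrow>
     (\<Prod>j=0..n. sin (real_of_int (ks j) * b / 2) / (real_of_int (ks j) * sin (b / 2))) = evalc L b)"
  using assms
proof (induction n)
  case 0
  then show ?case using factor_rep[of "ks 0"] by simp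
next
  case (Suc n)
  obtain L1 where L1: "nonneg L1" "wsum L1 = 1" "\<forall>b. sin (b/2) \<noteq> 0 \<longrightarrow>
     (\<Prod>j=0..n. sin (real_of_int (ks j) * b / 2) / (real_of_int (ks j) * sin (b / 2))) = evalc L1 b"
    using Suc by auto
  obtain L2 where L2: "nonneg L2" "wsum L2 = 1" "\<forall>b. sin (b/2) \<noteq> 0 \<longrightarrow>
     sin (real_of_int (ks (Suc n)) * b / 2) / (real_of_int (ks (Suc n)) * sin (b / 2)) = evalc L2 b"
    using factor_rep[of "ks (Suc n)"] Suc.prems by auto
  show ?case
    by (rule exI[of _ "mulc L1 L2"])
       (simp add: L1 L2 nonneg_mulc wsum_mulc evalc_mulc prod.atLeast0_atMost_Suc)
qed

lemma list_int:
  fixes H :: "int \<Rightarrow> real \<Rightarrow> real" and L :: "(real \<times> int) list"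
  assumes "\<And>m. (H m has_integral I m) T"
  shows "((\<lambda>b. \<Sum>(w,m)\<leftarrow>L. w * H m b) has_integral (\<Sum>(w,m)\<leftarrow>L. w * I m)) T"
proof (induction L)
  case Nil
  then show ?case by simp
next
  case (Cons p L)
  obtain w m where p: "p = (w,m)" by fastforce
  have "((\<lambda>b. w * H m b) has_integral w * I m) T" by (rule has_integral_mult_right[OF assms])
  from has_integral_add[OF this Cons.IH] show ?case unfolding p by simp
qed

lemma list_bound:
  assumes "nonneg L" "\<And>m. \<bar>X m\<bar> \<le> B"
  shows "\<bar>\<Sum>(w,m)\<leftarrow>L. w * X m\<bar> \<le> wsum L * B"
  using assms(1)
proof (induction L)
  case Nil
  then show ?case by (simp add: wsum_def)
next
  case (Cons p L)
  obtain w m where p: "p = (w,m)" by fastforce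
  have w: "w \<ge> 0" "nonneg L" using Cons.prems by (auto simp: p nonneg_def)
  have "\<bar>w * X m\<bar> \<le> w * B" using w assms(2)[of m] by (simp add: abs_mult mult_left_mono)
  then show ?case using Cons.IH w by (simp add: p wsum_def algebra_simps)
qed

lemma list_cmult: "c * evalc L b = (\<Sum>(w,m)\<leftarrow>L. w * (c * cos (of_int m * b / 2)))"
  by (induction L) (auto simp: evalc_def algebra_simps)

lemma list_zero: "(\<And>m. X m = 0) \<Longrightarrow> (\<Sum>(w,m)\<leftarrow>L. w * X m) = (0::real)"
  by (induction L) auto

lemma list_zero0: "(\<Sum>(w,m)\<leftarrow>L. (0::real)) = 0"
  by (induction L) auto

lemma list_cong: "(\<And>m. X m = Y m) \<Longrightarrow> (\<Sum>(w,m)\<leftarrow>L. w * X m) = (\<Sum>(w,m)\<leftarrow>L. w * Y m :: real)"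
  by simp

lemma sin_cos: "sin (x::real) * cos z = (sin (x+z) + sin (x-z))/2"
  by (simp add: sin_add sin_diff)

theorem lemma3p1:
  fixes n :: nat and k :: int and ks :: "nat \<Rightarrow> int"
  assumes "\<And>j. j \<le> n \<Longrightarrow> ks j \<noteq> 0"
  shows "\<bar>integral {-pi..pi} (\<lambda>\<beta>. sin (real_of_int k * \<beta> / 2) / (2 * sin (\<beta> / 2)) *
            (\<Prod>j=0..n. sin (real_of_int (ks j) * \<beta> / 2) / (real_of_int (ks j) * sin (\<beta> / 2))))\<bar> \<le> 4
    \<and> \<bar>integral {-pi..pi} (\<lambda>\<beta>. cos (\<beta> / 2) * sin (real_of_int k * \<beta> / 2) / (2 * sin (\<beta> / 2)) *
            (\<Prod>j=0..n. sin (real_of_int (ks j) * \<beta> / 2) / (real_of_int (ks j) * sin (\<beta> / 2))))\<bar> \<le> 10 / 3"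
proof -
  define P where "P = (\<lambda>\<beta>. \<Prod>j=0..n. sin (real_of_int (ks j) * \<beta> / 2) / (real_of_int (ks j) * sin (\<beta> / 2)))"
  obtain L where L: "nonneg L" "wsum L = 1" "\<And>b. sin (b/2) \<noteq> 0 \<Longrightarrow> P b = evalc L b"
  proof -
    have "\<exists>L. nonneg L \<and> wsum L = 1 \<and> (\<forall>b. sin (b/2) \<noteq> 0 \<longrightarrow> P b = evalc L b)"
      unfolding P_def by (rule prod_rep) (rule assms)
    then show ?thesis using that by blast
  qed
  define H1 where "H1 = (\<lambda>m b. (g (k+m) b + g (k-m) b) / 4)"
  define H2 where "H2 = (\<lambda>m b. (g (k+m+1) b + g (k+m-1) b + g (k-m+1) b + g (k-m-1) b) / 8)"
  have eq1: "(\<lambda>\<beta>. sin (real_of_int k * \<beta> / 2) / (2 * sin (\<beta> / 2)) * P \<beta>) = (\<lambda>b. \<Sum>(w,m)\<leftarrow>L. w * H1 m b)"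
  proof (rule ext)
    fix b :: real
    show "sin (real_of_int k * b / 2) / (2 * sin (b / 2)) * P b = (\<Sum>(w,m)\<leftarrow>L. w * H1 m b)"
    proof (cases "sin (b/2) = 0")
      case True
      then show ?thesis by (simp add: H1_def g_def list_zero0)
    next
      case False
      have "sin (real_of_int k * b / 2) / (2 * sin (b / 2)) * P b
          = (\<Sum>(w,m)\<leftarrow>L. w * (sin (real_of_int k * b / 2) / (2 * sin (b / 2)) * cos (of_int m * b / 2)))"
        using L(3)[OF False] list_cmult by simp
      also have "\<dots> = (\<Sum>(w,m)\<leftarrow>L. w * H1 m b)"
      proof (rule list_cong)
        fix m
        have "sin (real_of_int k * b / 2) * cos (of_int m * b / 2) = (sin (of_int (k+m) * b / 2) + sin (of_int (k-m) * b / 2)) / 2"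
          unfolding sin_cos by (simp add: algebra_simps add_divide_distrib diff_divide_distrib)
        then show "sin (real_of_int k * b / 2) / (2 * sin (b / 2)) * cos (of_int m * b / 2) = H1 m b"
          unfolding H1_def g_def using False by (simp add: field_simps)
      qed
      finally show ?thesis .
    qed
  qed
  have eq2: "(\<lambda>\<beta>. cos (\<beta> / 2) * sin (real_of_int k * \<beta> / 2) / (2 * sin (\<beta> / 2)) * P \<beta>) = (\<lambda>b. \<Sum>(w,m)\<leftarrow>L. w * H2 m b)"
  proof (rule ext)
    fix b :: real
    show "cos (b / 2) * sin (real_of_int k * b / 2) / (2 * sin (b / 2)) * P b = (\<Sum>(w,m)\<leftarrow>L. w * H2 m b)"
    proof (cases "sin (b/2) = 0")
      case True
      then show ?thesis by (simp add: H2_def g_def list_zero0)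
    next
      case False
      have "cos (b / 2) * sin (real_of_int k * b / 2) / (2 * sin (b / 2)) * P b
          = (\<Sum>(w,m)\<leftarrow>L. w * (cos (b / 2) * sin (real_of_int k * b / 2) / (2 * sin (b / 2)) * cos (of_int m * b / 2)))"
        using L(3)[OF False] list_cmult by simp
      also have "\<dots> = (\<Sum>(w,m)\<leftarrow>L. w * H2 m b)"
      proof (rule list_cong)
        fix m
        have a: "sin (real_of_int k * b / 2) * cos (of_int m * b / 2) = (sin (of_int (k+m) * b / 2) + sin (of_int (k-m) * b / 2)) / 2"
          unfolding sin_cos by (simp add: algebra_simps add_divide_distrib diff_divide_distrib)
        have c: "sin (of_int a * b / 2) * cos (b / 2) = (sin (of_int (a+1) * b / 2) + sin (of_int (a-1) * b / 2)) / 2" for a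
          unfolding sin_cos by (simp add: algebra_simps add_divide_distrib diff_divide_distrib)
        have "cos (b / 2) * sin (real_of_int k * b / 2) * cos (of_int m * b / 2)
            = cos (b / 2) * (sin (real_of_int k * b / 2) * cos (of_int m * b / 2))" by simp
        also have "\<dots> = cos (b / 2) * ((sin (of_int (k+m) * b / 2) + sin (of_int (k-m) * b / 2)) / 2)"
          by (simp only: a)
        also have "\<dots> = (sin (of_int (k+m) * b / 2) * cos (b / 2) + sin (of_int (k-m) * b / 2) * cos (b / 2)) / 2"
          by (simp add: algebra_simps)
        also have "\<dots> = (sin (of_int (k+m+1) * b / 2) + sin (of_int (k+m-1) * b / 2) + sin (of_int (k-m+1) * b / 2) + sin (of_int (k-m-1) * b / 2)) / 4"
          unfolding c by (simp add: field_simps)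
        finally have "cos (b / 2) * sin (real_of_int k * b / 2) * cos (of_int m * b / 2) = \<dots>" .
        then show "cos (b / 2) * sin (real_of_int k * b / 2) / (2 * sin (b / 2)) * cos (of_int m * b / 2) = H2 m b"
          unfolding H2_def g_def using False by (simp add: field_simps)
      qed
      finally show ?thesis .
    qed
  qed
  have i1: "((\<lambda>b. \<Sum>(w,m)\<leftarrow>L. w * H1 m b) has_integral (\<Sum>(w,m)\<leftarrow>L. w * ((Jb (k+m) + Jb (k-m)) / 4))) {-pi..pi}"
    by (rule list_int) (unfold H1_def, intro has_integral_divide has_integral_add g_int)
  have i2: "((\<lambda>b. \<Sum>(w,m)\<leftarrow>L. w * H2 m b) has_integral (\<Sum>(w,m)\<leftarrow>L. w * ((Jb (k+m+1) + Jb (k+m-1) + Jb (k-m+1) + Jb (k-m-1)) / 8))) {-pi..pi}"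
    by (rule list_int) (unfold H2_def, intro has_integral_divide has_integral_add g_int)
  have b1: "\<bar>(Jb (k+m) + Jb (k-m)) / 4\<bar> \<le> 4" for m
    using Jb_bound[of "k+m"] Jb_bound[of "k-m"] by simp
  have b2: "\<bar>(Jb (k+m+1) + Jb (k+m-1) + Jb (k-m+1) + Jb (k-m-1)) / 8\<bar> \<le> 10/3" for m
  proof -
    have a: "\<bar>Jb (k+m+1) + Jb (k+m-1)\<bar> \<le> 40/3" "\<bar>Jb (k-m+1) + Jb (k-m-1)\<bar> \<le> 40/3"
      using Jb_pair[of "k+m"] Jb_pair[of "k-m"] by simp_all
    have "\<bar>Jb (k+m+1) + Jb (k+m-1) + Jb (k-m+1) + Jb (k-m-1)\<bar> \<le> 80/3"
      using abs_triangle_ineq[of "Jb (k+m+1) + Jb (k+m-1)" "Jb (k-m+1) + Jb (k-m-1)"] a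
      by (simp add: add.assoc)
    then show ?thesis by simp
  qed
  have F1: "(\<lambda>\<beta>. sin (real_of_int k * \<beta> / 2) / (2 * sin (\<beta> / 2)) *
            (\<Prod>j=0..n. sin (real_of_int (ks j) * \<beta> / 2) / (real_of_int (ks j) * sin (\<beta> / 2))))
        = (\<lambda>b. \<Sum>(w,m)\<leftarrow>L. w * H1 m b)"
    using eq1 unfolding P_def .
  have F2: "(\<lambda>\<beta>. cos (\<beta> / 2) * sin (real_of_int k * \<beta> / 2) / (2 * sin (\<beta> / 2)) *
            (\<Prod>j=0..n. sin (real_of_int (ks j) * \<beta> / 2) / (real_of_int (ks j) * sin (\<beta> / 2))))
        = (\<lambda>b. \<Sum>(w,m)\<leftarrow>L. w * H2 m b)"
    using eq2 unfolding P_def .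
  have c1: "\<bar>\<Sum>(w,m)\<leftarrow>L. w * ((Jb (k+m) + Jb (k-m)) / 4)\<bar> \<le> wsum L * 4"
    by (rule list_bound[OF L(1)]) (rule b1)
  have c2: "\<bar>\<Sum>(w,m)\<leftarrow>L. w * ((Jb (k+m+1) + Jb (k+m-1) + Jb (k-m+1) + Jb (k-m-1)) / 8)\<bar> \<le> wsum L * (10/3)"
    by (rule list_bound[OF L(1)]) (rule b2)
  show ?thesis
    unfolding F1 F2 integral_unique[OF i1] integral_unique[OF i2]
    using c1 c2 L(2) by simp
qed
end
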